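(* Let $\mathcal{M}=\mathbb{R}^{d_{\mathbb E}}\times\mathbb{S}^{d_{\mathbb S}}\times\mathbb{H}^{d_{\mathbb H}}$ and let $(x_n,y_n)_{n=1}^N$, $x_n=(x_{\mathbb E,n},x_{\mathbb S,n},x_{\mathbb H,n})$, be points in a compact subset of $\mathcal{M}$ with labels $y_n\in\{-1,1\}$, such that $\|x_{\mathbb H,n}\|_2\le R$ for all $n$. Suppose the point set is $\varepsilon$-margin linearly separable for some $\varepsilon>0$, i.e. there are $w_{\mathbb E}\in\mathbb{R}^{d_{\mathbb E}}$ with $\|w_{\mathbb E}\|_2=\alpha_{\mathbb E}$, $b\in\mathbb{R}$, $w_{\mathbb S}\in\mathbb{R}^{d_{\mathbb S}+1}$ with $\|w_{\mathbb S}\|_2=\sqrt{C_{\mathbb S}}$, and $w_{\mathbb H}\in\mathbb{R}^{d_{\mathbb H}+1}$ with $\sqrt{[w_{\mathbb H},w_{\mathbb H}]}=\sqrt{-C_{\mathbb H}}$, such that for all $n$, $$y_n\big(w_{\mathbb E}^\top x_{\mathbb E,n}+b+\alpha_{\mathbb S}\,\mathrm{asin}(w_{\mathbb S}^\top x_{\mathbb S,n})+\alpha_{\mathbb H}\,\mathrm{asinh}([w_{\mathbb H},x_{\mathbb H,n}])\big)\ge\varepsilon,$$ and suppose moreover $\|w_{\mathbb H}\|_2\le 1/R$. Then the product space form perceptron (described below) converges in $O(1/\varepsilon^2)$ steps (number of updates).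
   Context: $\mathbb{S}^{d}=\{x\in\mathbb{R}^{d+1}:\langle x,x\rangle=C_{\mathbb S}^{-1}\}$ with $C_{\mathbb S}>0$; $\mathbb{H}^{d}=\{x\in\mathbb{R}^{d+1}:[x,x]=C_{\mathbb H}^{-1},x_1>0\}$ with $C_{\mathbb H}<0$, where $[u,v]=u^\top Hv$, $H=\mathrm{diag}(-1,1,\dots,1)$. $\alpha_{\mathbb E},\alpha_{\mathbb S},\alpha_{\mathbb H}>0$ are fixed weights. The perceptron: define the kernel $K(x,x_n)=1+x_{\mathbb E}^\top x_{\mathbb E,n}+\alpha_{\mathbb S}\,\mathrm{asin}(C_{\mathbb S}x_{\mathbb S}^\top x_{\mathbb S,n})+\alpha_{\mathbb H}\,\mathrm{asin}(R^{-2}x_{\mathbb H}^\top x_{\mathbb H,n})$. Start with $g_0\equiv0$, $k=0$, $n=1$; repeatedly: if $\mathrm{sgn}(g_k(x_n))\ne y_n$ (with $\mathrm{sgn}(0)=0$), set $g_{k+1}(x)=g_k(x)+y_nK(x,x_n)$ and $k\leftarrow k+1$; then $n\leftarrow (n \bmod N)+1$. A point $x$ is classified as $\mathrm{sgn}(g_k(x))$; convergence means that after the stated number of updates no further update occurs, i.e. all training points are correctly classified. *)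

theory Defs
  imports Complex_Main
begin

text \<open>Vectors in R^m are functions nat => real, only indices < m matter.
  Spherical / hyperbolic components live in R^(d+1), indices 0..d,
  and index 0 is the time-like coordinate for the Lorentz product.\<close>

definition dotp :: "nat \<Rightarrow> (nat \<Rightarrow> real) \<Rightarrow> (nat \<Rightarrow> real) \<Rightarrow> real" where
  "dotp m u v = (\<Sum>i<m. u i * v i)"

definition enorm :: "nat \<Rightarrow> (nat \<Rightarrow> real) \<Rightarrow> real" where
  "enorm m u = sqrt (dotp m u u)"

definition lorentz :: "nat \<Rightarrow> (nat \<Rightarrow> real) \<Rightarrow> (nat \<Rightarrow> real) \<Rightarrow> real" where
  "lorentz d u v = - u 0 * v 0 + (\<Sum>i\<in>{1..d}. u i * v i)"

definition on_sphere :: "nat \<Rightarrow> real \<Rightarrow> (nat \<Rightarrow> real) \<Rightarrow> bool" where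
  "on_sphere d CS x \<longleftrightarrow> dotp (d+1) x x = 1 / CS"

definition on_hyperboloid :: "nat \<Rightarrow> real \<Rightarrow> (nat \<Rightarrow> real) \<Rightarrow> bool" where
  "on_hyperboloid d CH x \<longleftrightarrow> lorentz d x x = 1 / CH \<and> x 0 > 0"

type_synonym point = "(nat \<Rightarrow> real) \<times> (nat \<Rightarrow> real) \<times> (nat \<Rightarrow> real)"

definition psf_kernel ::
  "nat \<Rightarrow> nat \<Rightarrow> nat \<Rightarrow> real \<Rightarrow> real \<Rightarrow> real \<Rightarrow> real \<Rightarrow> point \<Rightarrow> point \<Rightarrow> real" where
  "psf_kernel dE dS dH \<alpha>S \<alpha>H CS R x x' =
     (case x of (xE, xS, xH) \<Rightarrow> case x' of (xE', xS', xH') \<Rightarrow>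
       1 + dotp dE xE xE' + \<alpha>S * arcsin (CS * dotp (dS+1) xS xS')
         + \<alpha>H * arcsin (dotp (dH+1) xH xH' / R\<^sup>2))"

text \<open>Perceptron state: (list of indices of the points used in the updates so far,
  current index n). Training points are indexed 0..N-1 (0-based), cycled.
  g(x) = sum over updates j of y_j K(x, x_j).\<close>
definition perc_g ::
  "(point \<Rightarrow> point \<Rightarrow> real) \<Rightarrow> (nat \<Rightarrow> point) \<Rightarrow> (nat \<Rightarrow> real) \<Rightarrow> nat list \<Rightarrow> point \<Rightarrow> real" where
  "perc_g K X y upd x = sum_list (map (\<lambda>j. y j * K x (X j)) upd)"

definition perc_step ::
  "(point \<Rightarrow> point \<Rightarrow> real) \<Rightarrow> nat \<Rightarrow> (nat \<Rightarrow> point) \<Rightarrow> (nat \<Rightarrow> real)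
     \<Rightarrow> nat list \<times> nat \<Rightarrow> nat list \<times> nat" where
  "perc_step K N X y s = (case s of (upd, n) \<Rightarrow>
     (if sgn (perc_g K X y upd (X n)) \<noteq> y n then upd @ [n] else upd, Suc n mod N))"

definition perc_run ::
  "(point \<Rightarrow> point \<Rightarrow> real) \<Rightarrow> nat \<Rightarrow> (nat \<Rightarrow> point) \<Rightarrow> (nat \<Rightarrow> real) \<Rightarrow> nat \<Rightarrow> nat list \<times> nat" where
  "perc_run K N X y t = (perc_step K N X y ^^ t) ([], 0)"

definition perc_converges_within ::
  "(point \<Rightarrow> point \<Rightarrow> real) \<Rightarrow> nat \<Rightarrow> (nat \<Rightarrow> point) \<Rightarrow> (nat \<Rightarrow> real) \<Rightarrow> real \<Rightarrow> bool" where
  "perc_converges_within K N X y T \<longleftrightarrow>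
     (\<exists>t. real (length (fst (perc_run K N X y t))) \<le> T \<and>
          (\<forall>t'\<ge>t. fst (perc_run K N X y t') = fst (perc_run K N X y t)))"

end

theory Submission
  imports Defs "HOL-Analysis.Analysis"
begin


definition bc :: "nat \<Rightarrow> real" where "bc k = ((-1/2) gchoose k)"
definition fh :: "nat \<Rightarrow> real" where
  "fh n = (if even n then bc (n div 2) / real (Suc n) else 0)"
definition fa :: "nat \<Rightarrow> real" where
  "fa n = (if even n then (-1)^(n div 2) * bc (n div 2) / real (Suc n) else 0)"

lemma powr_mhalf: "(u::real) > 0 \<Longrightarrow> u powr (-1/2) = inverse (sqrt u)"
proof -
  assume u: "u > 0"
  have "u powr (-1/2) = u powr (-(1/2))" by simp
  also have "\<dots> = inverse (u powr (1/2))" by (rule powr_minus)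
  also have "\<dots> = inverse (sqrt u)" using u by (simp add: powr_half_sqrt)
  finally show ?thesis .
qed

lemma bc_sign: "(-1)^k * bc k \<ge> 0"
proof -
  have "bc k = (-1)^k * pochhammer (1/2) k / fact k"
    unfolding bc_def by (subst gbinomial_pochhammer) simp
  hence "(-1)^k * bc k = pochhammer (1/2) k / fact k"
    by (simp add: power_mult_distrib[symmetric])
  moreover have "pochhammer (1/2::real) k > 0" by (rule pochhammer_pos) simp
  ultimately show ?thesis by simp
qed

lemma fa_nonneg: "fa n \<ge> 0"
  using bc_sign[of "n div 2"] by (simp add: fa_def)

lemma m1sq: "((-1::real)^k)^2 = 1"
  by (metis power_minus1_even power_mult mult.commute)

lemma fh_sq: "(fh n)^2 = (fa n)^2"
  by (simp add: fa_def fh_def power_mult_distrib power_divide m1sq)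

lemma even_series:
  fixes g :: "nat \<Rightarrow> real"
  assumes "g sums s"
  shows "(\<lambda>n. if even n then g (n div 2) else 0) sums s"
  using sums_if[OF sums_zero assms] by simp

lemma deriv_series_sums:
  fixes x :: real and c :: real
  assumes "\<bar>c * x^2\<bar> < 1"
  shows "(\<lambda>n. (if even n then c^(n div 2) * bc (n div 2) / real (Suc n) else 0) * real (Suc n) * x^n)
     sums ((1 + c * x^2) powr (-1/2))"
proof -
  have "(\<lambda>k. bc k * (c * x^2)^k) sums ((1 + c * x^2) powr (-1/2))"
    unfolding bc_def using gen_binomial_real[OF assms, of "-1/2"] by simp
  note ser = even_series[OF this]
  have eq: "(\<lambda>n. (if even n then c^(n div 2) * bc (n div 2) / real (Suc n) else 0) * real (Suc n) * x^n)
      = (\<lambda>n. if even n then bc (n div 2) * (c * x^2)^(n div 2) else 0)"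
  proof (intro ext)
    fix n :: nat
    show "(if even n then c^(n div 2) * bc (n div 2) / real (Suc n) else 0) * real (Suc n) * x^n
      = (if even n then bc (n div 2) * (c * x^2)^(n div 2) else 0)"
    proof (cases "even n")
      case True
      then obtain k where "n = 2*k" by blast
      thus ?thesis by (simp add: power_mult_distrib power_mult)
    qed simp
  qed
  show ?thesis unfolding eq by (rule ser)
qed

definition gc :: "real \<Rightarrow> nat \<Rightarrow> real" where
  "gc c n = (if even n then c^(n div 2) * bc (n div 2) / real (Suc n) else 0)"

lemma gc_summ:
  assumes c: "\<bar>c\<bar> \<le> 1" and x: "\<bar>x\<bar> < 1"
  shows "summable (\<lambda>n. gc c n * real (Suc n) * x^n)"
proof -
  have "\<bar>c * x^2\<bar> < 1"
  proof -
    have "\<bar>c * x^2\<bar> = \<bar>c\<bar> * x^2" by (simp add: abs_mult)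
    also have "\<dots> \<le> x^2" using c by (simp add: mult_left_le_one_le)
    also have "x^2 < 1" using x by (simp add: abs_square_less_1)
    finally show ?thesis .
  qed
  from deriv_series_sums[OF this] show ?thesis unfolding gc_def by (rule sums_summable)
qed

lemma gc_series:
  fixes T :: "real \<Rightarrow> real"
  assumes c: "\<bar>c\<bar> \<le> 1" and x: "\<bar>x\<bar> < 1"
    and T0: "T 0 = 0"
    and dT: "\<And>x. \<bar>x\<bar> < 1 \<Longrightarrow> DERIV T x :> (1 + c * x^2) powr (-1/2)"
  shows "(\<lambda>n. gc c n * x^Suc n) sums T x"
proof -
  have cx: "\<bar>c * x^2\<bar> < 1" if "\<bar>x\<bar> < 1" for x
  proof -
    have "\<bar>c * x^2\<bar> = \<bar>c\<bar> * x^2" by (simp add: abs_mult)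
    also have "\<dots> \<le> x^2" using c by (simp add: mult_left_le_one_le)
    also have "x^2 < 1" using that by (simp add: abs_square_less_1)
    finally show ?thesis .
  qed
  have S: "\<And>x. \<bar>x\<bar> < 1 \<Longrightarrow> (\<lambda>n. gc c n * real (Suc n) * x^n) sums ((1 + c * x^2) powr (-1/2))"
    unfolding gc_def by (rule deriv_series_sums[OF cx])
  have D: "DERIV (\<lambda>x. (\<Sum>n. gc c n * x^(Suc n))) y :> (1 + c * y^2) powr (-1/2)"
    if "\<bar>y\<bar> < 1" for y
  proof -
    have "DERIV (\<lambda>x. (\<Sum>n. gc c n * x^(Suc n))) y :> (\<Sum>n. gc c n * real (Suc n) * y^n)"
    proof (rule DERIV_power_series'[where R=1])
      fix x :: real assume "x \<in> {-1<..<1}"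
      hence "\<bar>x\<bar> < 1" by auto
      from S[OF this] show "summable (\<lambda>n. gc c n * real (Suc n) * x^n)" by (rule sums_summable)
    qed (use that in auto)
    moreover have "(\<Sum>n. gc c n * real (Suc n) * y^n) = (1 + c * y^2) powr (-1/2)"
      using sums_unique[OF S[OF that]] by simp
    ultimately show ?thesis by simp
  qed
  have eq: "(\<Sum>n. gc c n * x^(Suc n)) - T x = (\<Sum>n. gc c n * 0^(Suc n)) - T 0"
  proof (rule DERIV_isconst3[where a="-1" and b=1 and f="\<lambda>x. (\<Sum>n. gc c n * x^(Suc n)) - T x"])
    show "x \<in> {-1<..<1}" using x by auto
    show "(0::real) \<in> {-1<..<1}" by auto
    fix y :: real assume "y \<in> {-1<..<1}"
    hence y: "\<bar>y\<bar> < 1" by auto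
    show "DERIV (\<lambda>x. (\<Sum>n. gc c n * x^(Suc n)) - T x) y :> 0"
      using DERIV_diff[OF D[OF y] dT[OF y]] by (simp only: diff_self)
  qed simp
  hence val: "(\<Sum>n. gc c n * x^(Suc n)) = T x" using T0 by simp
  obtain z where z: "\<bar>x\<bar> < z" "z < 1"
    using x dense[of "\<bar>x\<bar>" 1] by blast
  have "summable (\<lambda>n. norm (gc c n * real (Suc n) * x^n))"
  proof -
    have "summable (\<lambda>n. (gc c n * real (Suc n)) * z^n)"
      using S[of z] z sums_summable by (simp add: mult.assoc)
    from powser_insidea[OF this, of x] z show ?thesis by simp
  qed
  hence "summable (\<lambda>n. gc c n * x^(Suc n))"
  proof (rule summable_comparison_test'[where N=0])
    fix n :: nat
    have "norm (gc c n * x^(Suc n)) = \<bar>gc c n\<bar> * \<bar>x\<bar>^n * \<bar>x\<bar>"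
      by (simp add: abs_mult power_abs)
    also have "\<dots> \<le> \<bar>gc c n\<bar> * \<bar>x\<bar>^n * real (Suc n)"
      using x by (intro mult_left_mono) auto
    also have "\<dots> = norm (gc c n * real (Suc n) * x^n)"
      by (simp add: abs_mult power_abs)
    finally show "norm (gc c n * x^(Suc n)) \<le> norm (gc c n * real (Suc n) * x^n)" .
  qed
  from summable_sums[OF this] show ?thesis unfolding val .
qed

lemma arcsin_series:
  assumes "\<bar>x\<bar> < 1"
  shows "(\<lambda>n. fa n * x^Suc n) sums arcsin x"
proof -
  have "fa = gc (-1)" by (rule ext) (simp only: fa_def gc_def)
  moreover have "(\<lambda>n. gc (-1) n * x^Suc n) sums arcsin x"
  proof (rule gc_series[where T=arcsin and c="-1" and x=x])
    fix y :: real assume y: "\<bar>y\<bar> < 1"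
    hence "y^2 < 1" by (simp add: abs_square_less_1)
    hence "(1 + (-1) * y^2) powr (-1/2) = inverse (sqrt (1 - y^2))"
      using powr_mhalf[of "1 - y^2"] by simp
    moreover have "DERIV arcsin y :> inverse (sqrt (1 - y^2))"
      by (rule DERIV_arcsin) (use y in auto)
    ultimately show "DERIV arcsin y :> (1 + (-1) * y^2) powr (-1/2)" by simp
  qed (use assms in simp_all)
  ultimately show ?thesis by (simp only:)
qed

lemma arsinh_series:
  assumes "\<bar>x\<bar> < 1"
  shows "(\<lambda>n. fh n * x^Suc n) sums arsinh x"
proof -
  have "fh = gc 1" by (rule ext) (simp only: fh_def gc_def power_one mult_1)
  moreover have "(\<lambda>n. gc 1 n * x^Suc n) sums arsinh x"
  proof (rule gc_series[where T=arsinh and c=1 and x=x])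
    fix y :: real assume y: "\<bar>y\<bar> < 1"
    have e1: "(1 + 1 * y^2) = y^2 + 1" by simp
    have "(y^2 + 1) powr (-1/2) = inverse (sqrt (y^2 + 1))"
      by (rule powr_mhalf) (simp add: add_nonneg_pos)
    also have "\<dots> = 1 / sqrt (y^2 + 1)" by (simp only: inverse_eq_divide)
    finally have e2: "(y^2 + 1) powr (-1/2) = 1 / sqrt (y^2 + 1)" .
    show "DERIV arsinh y :> (1 + 1 * y^2) powr (-1/2)"
      unfolding e1 e2 by (rule arsinh_real_has_field_derivative)
  next
    show "\<bar>1::real\<bar> \<le> 1" by simp
    show "\<bar>x\<bar> < 1" by (rule assms)
    show "arsinh 0 = (0::real)" by simp
  qed
  ultimately show ?thesis by (simp only:)
qed



lemma comb2:
  fixes A1 A2 W1 W2 Q1 Q2 :: real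
  assumes h1: "A1^2 \<le> W1*Q1" and h2: "A2^2 \<le> W2*Q2"
    and p: "0\<le>W1" "0\<le>W2" "0\<le>Q1" "0\<le>Q2"
  shows "(A1+A2)^2 \<le> (W1+W2)*(Q1+Q2)"
proof -
  have "(A1*A2)^2 = A1^2 * A2^2" by (simp add: power_mult_distrib)
  also have "\<dots> \<le> (W1*Q1)*(W2*Q2)"
    by (rule mult_mono[OF h1 h2]) (use p in auto)
  also have "\<dots> = (W1*Q2)*(W2*Q1)" by (simp add: mult_ac)
  finally have x: "(A1*A2)^2 \<le> (W1*Q2)*(W2*Q1)" .
  define uu where "uu = W1*Q2"
  define vv where "vv = W2*Q1"
  have uv: "0 \<le> uu" "0 \<le> vv" using p by (auto simp: uu_def vv_def)
  have "(2*(A1*A2))^2 = 4 * (A1*A2)^2" by (simp add: power_mult_distrib)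
  also have "\<dots> \<le> 4*(uu * vv)" using x by (simp add: uu_def vv_def)
  also have "\<dots> \<le> (uu+vv)^2" using sum_squares_ge_zero[of "uu-vv" 0]
    by (simp add: power2_eq_square algebra_simps)
  finally have "2*(A1*A2) \<le> uu+vv"
    using power2_le_imp_le[of "2*(A1*A2)" "uu+vv"] uv by simp
  hence "(A1+A2)^2 \<le> A1^2 + A2^2 + (uu+vv)"
    by (simp add: power2_eq_square algebra_simps)
  also have "\<dots> \<le> W1*Q1 + W2*Q2 + (uu+vv)" using h1 h2 by simp
  also have "\<dots> = (W1+W2)*(Q1+Q2)" by (simp add: uu_def vv_def algebra_simps)
  finally show ?thesis .
qed

lemma dotp_pow:
  "dotp d u v ^ m = (\<Sum>f\<in>PiE {..<m} (\<lambda>_. {..<d}). (\<Prod>l<m. u (f l)) * (\<Prod>l<m. v (f l)))"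
proof -
  have "dotp d u v ^ m = (\<Prod>l<m. \<Sum>i<d. u i * v i)" by (simp add: dotp_def)
  also have "\<dots> = (\<Sum>f\<in>PiE {..<m} (\<lambda>_. {..<d}). \<Prod>l<m. u (f l) * v (f l))"
    by (rule prod_sum_PiE) auto
  also have "\<dots> = (\<Sum>f\<in>PiE {..<m} (\<lambda>_. {..<d}). (\<Prod>l<m. u (f l)) * (\<Prod>l<m. v (f l)))"
    by (simp add: prod.distrib)
  finally show ?thesis .
qed

lemma tensor_cs:
  fixes a :: "'i \<Rightarrow> real" and x :: "'i \<Rightarrow> nat \<Rightarrow> real"
  assumes fin: "finite I"
  shows "(\<Sum>i\<in>I. a i * dotp d w (x i) ^ m)^2 \<le> dotp d w w ^ m * (\<Sum>i\<in>I. \<Sum>j\<in>I. a i * a j * dotp d (x i) (x j) ^ m)"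
    and "0 \<le> (\<Sum>i\<in>I. \<Sum>j\<in>I. a i * a j * dotp d (x i) (x j) ^ m)"
proof -
  define F where "F = PiE {..<m} (\<lambda>_. {..<d::nat})"
  define P where "P u f = (\<Prod>l<m. (u::nat\<Rightarrow>real) (f l))" for u f
  define V where "V f = (\<Sum>i\<in>I. a i * P (x i) f)" for f
  have e: "dotp d u v ^ m = (\<Sum>f\<in>F. P u f * P v f)" for u v
    unfolding F_def P_def by (rule dotp_pow)
  have h1: "(\<Sum>i\<in>I. a i * dotp d w (x i) ^ m) = (\<Sum>f\<in>F. P w f * V f)"
  proof -
    have "(\<Sum>i\<in>I. a i * dotp d w (x i) ^ m) = (\<Sum>i\<in>I. \<Sum>f\<in>F. P w f * (a i * P (x i) f))"
      by (simp add: e sum_distrib_left mult_ac)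
    also have "\<dots> = (\<Sum>f\<in>F. \<Sum>i\<in>I. P w f * (a i * P (x i) f))" by (rule sum.swap)
    also have "\<dots> = (\<Sum>f\<in>F. P w f * V f)" by (simp add: V_def sum_distrib_left)
    finally show ?thesis .
  qed
  have h2: "(\<Sum>i\<in>I. \<Sum>j\<in>I. a i * a j * dotp d (x i) (x j) ^ m) = (\<Sum>f\<in>F. (V f)^2)"
  proof -
    have "(\<Sum>i\<in>I. \<Sum>j\<in>I. a i * a j * dotp d (x i) (x j) ^ m)
        = (\<Sum>i\<in>I. \<Sum>j\<in>I. \<Sum>f\<in>F. (a i * P (x i) f) * (a j * P (x j) f))"
      by (simp add: e sum_distrib_left mult_ac)
    also have "\<dots> = (\<Sum>i\<in>I. \<Sum>f\<in>F. \<Sum>j\<in>I. (a i * P (x i) f) * (a j * P (x j) f))"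
      by (rule sum.cong[OF refl], rule sum.swap)
    also have "\<dots> = (\<Sum>f\<in>F. \<Sum>i\<in>I. \<Sum>j\<in>I. (a i * P (x i) f) * (a j * P (x j) f))"
      by (rule sum.swap)
    also have "\<dots> = (\<Sum>f\<in>F. V f * V f)"
      by (simp add: V_def sum_product)
    finally show ?thesis by (simp add: power2_eq_square)
  qed
  have h3: "dotp d w w ^ m = (\<Sum>f\<in>F. (P w f)^2)" by (simp add: e power2_eq_square)
  show "(\<Sum>i\<in>I. a i * dotp d w (x i) ^ m)^2 \<le> dotp d w w ^ m * (\<Sum>i\<in>I. \<Sum>j\<in>I. a i * a j * dotp d (x i) (x j) ^ m)"
    unfolding h1 h2 h3 by (rule Cauchy_Schwarz_ineq_sum)
  show "0 \<le> (\<Sum>i\<in>I. \<Sum>j\<in>I. a i * a j * dotp d (x i) (x j) ^ m)"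
    unfolding h2 by (rule sum_nonneg) simp
qed

lemma scale_comp:
  fixes S P Qr s c c' :: real
  assumes "S^2 \<le> P * Qr" "0 \<le> Qr" "0 \<le> P" "P \<le> s" "0 \<le> c" "c'^2 = c^2"
  shows "(c' * S)^2 \<le> c * (c * s * Qr)" "0 \<le> c * s * Qr"
proof -
  have "(c' * S)^2 = c^2 * S^2" by (simp add: power_mult_distrib assms(6))
  also have "\<dots> \<le> c^2 * (P * Qr)" by (rule mult_left_mono) (use assms in auto)
  also have "\<dots> \<le> c^2 * (s * Qr)" by (intro mult_left_mono mult_right_mono) (use assms in auto)
  also have "\<dots> = c * (c * s * Qr)" by (simp add: power2_eq_square)
  finally show "(c' * S)^2 \<le> c * (c * s * Qr)" .
  show "0 \<le> c * s * Qr" using assms by simp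
qed

lemma dotp_cs: "(dotp d u v)^2 \<le> dotp d u u * dotp d v v"
  unfolding dotp_def using Cauchy_Schwarz_ineq_sum[of u v "{..<d}"]
  by (simp add: power2_eq_square)

lemma dotp_nonneg: "0 \<le> dotp d u u"
  unfolding dotp_def by (rule sum_nonneg) simp

lemma dotp_comm: "dotp d u v = dotp d v u"
  unfolding dotp_def by (simp add: mult.commute)

lemma abs_le1:
  fixes d A B al be k :: real
  assumes "d^2 \<le> A*B" "0 \<le> A" "0 \<le> B" "A \<le> al" "B \<le> be" "k^2 * (al*be) \<le> 1"
  shows "\<bar>k * d\<bar> \<le> 1"
proof -
  have "(k*d)^2 = k^2 * d^2" by (simp add: power_mult_distrib)
  also have "\<dots> \<le> k^2 * (al*be)"
    by (intro mult_left_mono order_trans[OF assms(1)] mult_mono) (use assms in auto)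
  also have "\<dots> \<le> 1" by (rule assms(6))
  finally show ?thesis by (simp add: abs_square_le_1)
qed

definition hw :: "(nat \<Rightarrow> real) \<Rightarrow> nat \<Rightarrow> real" where
  "hw w i = (if i = 0 then - w 0 else w i)"

lemma lorentz_hw: "lorentz d w v = dotp (Suc d) (hw w) v"
  unfolding lorentz_def dotp_def sum.lessThan_Suc_shift One_nat_def sum.atLeast1_atMost_eq
  by (simp add: hw_def)

lemma dotp_hw: "dotp (Suc d) (hw w) (hw w) = dotp (Suc d) w w"
  unfolding dotp_def sum.lessThan_Suc_shift
  by (simp add: hw_def)



lemma rlt: "0 \<le> (r::real) \<Longrightarrow> r < 1 \<Longrightarrow> \<bar>t\<bar> \<le> 1 \<Longrightarrow> \<bar>r * t\<bar> < 1"
proof -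
  assume a: "0 \<le> r" "r < 1" "\<bar>t\<bar> \<le> 1"
  have "\<bar>r * t\<bar> = r * \<bar>t\<bar>" using a by (simp add: abs_mult)
  also have "\<dots> \<le> r" using a mult_left_le[of "\<bar>t\<bar>" r] by simp
  finally show ?thesis using a by simp
qed

lemma main_r:
  fixes a :: "'i \<Rightarrow> real" and p :: "'i \<Rightarrow> point"
  assumes fin: "finite I"
    and r: "0 \<le> r" "r < 1"
    and pos: "\<alpha>S \<ge> 0" "\<alpha>H \<ge> 0" "CS > 0" "R > 0"
    and sph: "\<forall>i\<in>I. dotp (Suc dS) (fst (snd (p i))) (fst (snd (p i))) = 1/CS"
    and hyp: "\<forall>i\<in>I. dotp (Suc dH) (snd (snd (p i))) (snd (snd (p i))) \<le> R^2"
    and wS: "dotp (Suc dS) wS wS = CS"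
    and wH: "dotp (Suc dH) wH wH \<le> 1/R^2"
  shows "(\<Sum>i\<in>I. a i * (dotp dE wE (fst (p i)) + b
            + \<alpha>S * arcsin (r * dotp (Suc dS) wS (fst (snd (p i))))
            + \<alpha>H * arsinh (r * lorentz dH wH (snd (snd (p i))))))^2
     \<le> (dotp dE wE wE + b^2 + (\<alpha>S + \<alpha>H) * (pi/2)) *
        (\<Sum>i\<in>I. \<Sum>j\<in>I. a i * a j * (1 + dotp dE (fst (p i)) (fst (p j))
            + \<alpha>S * arcsin (r * (CS * dotp (Suc dS) (fst (snd (p i))) (fst (snd (p j)))))
            + \<alpha>H * arcsin (r * (dotp (Suc dH) (snd (snd (p i))) (snd (snd (p j))) / R^2))))"
proof -
  define xE where "xE i = fst (p i)" for i
  define xS where "xS i = fst (snd (p i))" for i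
  define xH where "xH i = snd (snd (p i))" for i
  define w' where "w' = hw wH"
  have lor: "lorentz dH wH v = dotp (Suc dH) w' v" for v
    unfolding w'_def by (rule lorentz_hw)
  have w'w': "dotp (Suc dH) w' w' \<le> 1/R^2" using wH unfolding w'_def dotp_hw .
  have w'0: "0 \<le> dotp (Suc dH) w' w'" by (rule dotp_nonneg)
  have bS: "\<bar>dotp (Suc dS) wS (xS i)\<bar> \<le> 1" if "i \<in> I" for i
    using abs_le1[OF dotp_cs[of "Suc dS" wS "xS i"] dotp_nonneg dotp_nonneg, where al=CS and be="1/CS" and k=1]
      wS sph that pos by (simp add: xS_def)
  have bSS: "\<bar>CS * dotp (Suc dS) (xS i) (xS j)\<bar> \<le> 1" if "i \<in> I" "j \<in> I" for i j
    using abs_le1[OF dotp_cs[of "Suc dS" "xS i" "xS j"] dotp_nonneg dotp_nonneg, where al="1/CS" and be="1/CS" and k=CS]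
      sph that pos by (simp add: xS_def power2_eq_square)
  have bH: "\<bar>dotp (Suc dH) w' (xH i)\<bar> \<le> 1" if "i \<in> I" for i
    using abs_le1[OF dotp_cs[of "Suc dH" w' "xH i"] dotp_nonneg dotp_nonneg w'w', where be="R^2" and k=1]
      hyp that pos by (simp add: xH_def)
  have bHH: "\<bar>dotp (Suc dH) (xH i) (xH j) / R^2\<bar> \<le> 1" if "i \<in> I" "j \<in> I" for i j
  proof -
    have k: "(1/R^2)^2 * (R^2 * R^2) \<le> 1" using pos by (simp add: power2_eq_square)
    have hi: "dotp (Suc dH) (xH i) (xH i) \<le> R^2" "dotp (Suc dH) (xH j) (xH j) \<le> R^2"
      using hyp that by (auto simp: xH_def)
    have "\<bar>1/R^2 * dotp (Suc dH) (xH i) (xH j)\<bar> \<le> 1"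
      by (rule abs_le1[OF dotp_cs dotp_nonneg dotp_nonneg hi k])
    moreover have "1/R^2 * dotp (Suc dH) (xH i) (xH j) = dotp (Suc dH) (xH i) (xH j) / R^2" by simp
    ultimately show ?thesis by simp
  qed
  define F where "F N i = dotp dE wE (xE i) + b
      + \<alpha>S * (\<Sum>n<N. fa n * (r * dotp (Suc dS) wS (xS i))^Suc n)
      + \<alpha>H * (\<Sum>n<N. fh n * (r * dotp (Suc dH) w' (xH i))^Suc n)" for N i
  define G where "G N i j = 1 + dotp dE (xE i) (xE j)
      + \<alpha>S * (\<Sum>n<N. fa n * (r * (CS * dotp (Suc dS) (xS i) (xS j)))^Suc n)
      + \<alpha>H * (\<Sum>n<N. fa n * (r * (dotp (Suc dH) (xH i) (xH j) / R^2))^Suc n)" for N i j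
  define A where "A N = (\<Sum>i\<in>I. a i * F N i)" for N
  define Q where "Q N = (\<Sum>i\<in>I. \<Sum>j\<in>I. a i * a j * G N i j)" for N
  define cS where "cS n = \<alpha>S * fa n * r^Suc n" for n
  define cH where "cH n = \<alpha>H * fa n * r^Suc n" for n
  define cH' where "cH' n = \<alpha>H * fh n * r^Suc n" for n
  define WN where "WN N = dotp dE wE wE + b^2 + (\<Sum>n<N. cS n + cH n)" for N
  define SA where "SA n = (\<Sum>i\<in>I. a i * dotp (Suc dS) wS (xS i) ^ Suc n)" for n
  define SQ where "SQ n = (\<Sum>i\<in>I. \<Sum>j\<in>I. a i * a j * dotp (Suc dS) (xS i) (xS j) ^ Suc n)" for n
  define HA where "HA n = (\<Sum>i\<in>I. a i * dotp (Suc dH) w' (xH i) ^ Suc n)" for n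
  define HQ where "HQ n = (\<Sum>i\<in>I. \<Sum>j\<in>I. a i * a j * dotp (Suc dH) (xH i) (xH j) ^ Suc n)" for n
  have Asuc: "A (Suc N) = A N + cS N * SA N + cH' N * HA N" for N
  proof -
    have "a i * F (Suc N) i = a i * F N i + cS N * (a i * dotp (Suc dS) wS (xS i) ^ Suc N)
        + cH' N * (a i * dotp (Suc dH) w' (xH i) ^ Suc N)" for i
      by (simp add: F_def cS_def cH'_def power_mult_distrib algebra_simps)
    thus ?thesis by (simp add: A_def SA_def HA_def sum.distrib sum_distrib_left)
  qed
  have Qsuc: "Q (Suc N) = Q N + (cS N * CS^Suc N) * SQ N + (cH N * (1/R^2)^Suc N) * HQ N" for N
  proof -
    have "a i * a j * G (Suc N) i j = a i * a j * G N i j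
        + (cS N * CS^Suc N) * (a i * a j * dotp (Suc dS) (xS i) (xS j) ^ Suc N)
        + (cH N * (1/R^2)^Suc N) * (a i * a j * dotp (Suc dH) (xH i) (xH j) ^ Suc N)" for i j
      by (simp add: G_def cS_def cH_def power_mult_distrib power_divide algebra_simps)
    thus ?thesis by (simp add: Q_def SQ_def HQ_def sum.distrib sum_distrib_left)
  qed
  have A0: "A 0 = (\<Sum>i\<in>I. a i * dotp dE wE (xE i) ^ 1) + b * (\<Sum>i\<in>I. a i * dotp 0 wE wE ^ 0)"
    by (simp add: A_def F_def sum.distrib sum_distrib_left algebra_simps)
  have Q0: "Q 0 = (\<Sum>i\<in>I. \<Sum>j\<in>I. a i * a j * dotp dE (xE i) (xE j) ^ 1)
       + (\<Sum>i\<in>I. \<Sum>j\<in>I. a i * a j * dotp 0 (xE i) (xE j) ^ 0)"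
    by (simp add: Q_def G_def sum.distrib algebra_simps)
  have fa0: "0 \<le> fa n" for n by (rule fa_nonneg)
  have claim: "A N ^2 \<le> WN N * Q N \<and> 0 \<le> Q N \<and> 0 \<le> WN N" for N
  proof (induction N)
    case 0
    have e1: "(\<Sum>i\<in>I. a i * dotp dE wE (xE i) ^ 1)^2 \<le> dotp dE wE wE ^ 1 * (\<Sum>i\<in>I. \<Sum>j\<in>I. a i * a j * dotp dE (xE i) (xE j) ^ 1)"
      "0 \<le> (\<Sum>i\<in>I. \<Sum>j\<in>I. a i * a j * dotp dE (xE i) (xE j) ^ 1)"
      using tensor_cs(1)[OF fin, where a=a and d="dE" and w=wE and x=xE and m="1"] tensor_cs(2)[OF fin, where a=a and d="dE" and x=xE and m="1"] by auto
    have e2: "(\<Sum>i\<in>I. a i * dotp 0 wE (xE i) ^ 0)^2 \<le> dotp 0 wE wE ^ 0 * (\<Sum>i\<in>I. \<Sum>j\<in>I. a i * a j * dotp 0 (xE i) (xE j) ^ 0)"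
      "0 \<le> (\<Sum>i\<in>I. \<Sum>j\<in>I. a i * a j * dotp 0 (xE i) (xE j) ^ 0)"
      using tensor_cs(1)[OF fin, where a=a and d="0" and w=wE and x=xE and m="0"] tensor_cs(2)[OF fin, where a=a and d="0" and x=xE and m="0"] by auto
    have e3: "(b * (\<Sum>i\<in>I. a i * dotp 0 wE wE ^ 0))^2 \<le> b^2 * (\<Sum>i\<in>I. \<Sum>j\<in>I. a i * a j * dotp 0 (xE i) (xE j) ^ 0)"
      using e2(1) by (simp add: power_mult_distrib mult_left_mono)
    have "A 0 ^2 \<le> (dotp dE wE wE + b^2) * Q 0"
      unfolding A0 Q0 by (rule comb2[OF _ e3]) (use e1 e2 dotp_nonneg in auto)
    moreover have "0 \<le> Q 0" unfolding Q0 using e1 e2 by simp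
    moreover have "0 \<le> WN 0" unfolding WN_def using dotp_nonneg by simp
    ultimately show ?case by (simp add: WN_def)
  next
    case (Suc N)
    let ?m = "Suc N"
    have s1: "(cS N * SA N)^2 \<le> cS N * (cS N * CS^?m * SQ N)" "0 \<le> cS N * CS^?m * SQ N"
    proof -
      note t = tensor_cs(1)[OF fin, where a=a and d="Suc dS" and w=wS and x=xS and m="?m"] tensor_cs(2)[OF fin, where a=a and d="Suc dS" and x=xS and m="?m"]
      have "SA N ^2 \<le> CS^?m * SQ N" "0 \<le> SQ N" using t wS by (simp_all add: SA_def SQ_def)
      thus "(cS N * SA N)^2 \<le> cS N * (cS N * CS^?m * SQ N)" "0 \<le> cS N * CS^?m * SQ N"
        using scale_comp[of "SA N" "CS^?m" "SQ N" "CS^?m" "cS N" "cS N"] pos r fa0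
        by (simp_all add: cS_def)
    qed
    have s2: "(cH' N * HA N)^2 \<le> cH N * (cH N * (1/R^2)^?m * HQ N)" "0 \<le> cH N * (1/R^2)^?m * HQ N"
    proof -
      note t = tensor_cs(1)[OF fin, where a=a and d="Suc dH" and w=w' and x=xH and m="?m"] tensor_cs(2)[OF fin, where a=a and d="Suc dH" and x=xH and m="?m"]
      have h: "HA N ^2 \<le> dotp (Suc dH) w' w' ^ ?m * HQ N" "0 \<le> HQ N" using t by (simp_all add: HA_def HQ_def)
      have pm: "dotp (Suc dH) w' w' ^ ?m \<le> (1/R^2)^?m" by (rule power_mono[OF w'w' w'0])
      have cc: "(cH' N)^2 = (cH N)^2" unfolding cH'_def cH_def by (simp add: power_mult_distrib fh_sq)
      show "(cH' N * HA N)^2 \<le> cH N * (cH N * (1/R^2)^?m * HQ N)" "0 \<le> cH N * (1/R^2)^?m * HQ N"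
        using scale_comp[OF h(1) h(2) zero_le_power[OF w'0] pm _ cc] pos r fa0
        by (simp_all add: cH_def)
    qed
    have WNs: "WN (Suc N) = WN N + cS N + cH N" by (simp add: WN_def)
    have c0: "0 \<le> cS N" "0 \<le> cH N" using pos r fa0 by (simp_all add: cS_def cH_def)
    have "(A N + cS N * SA N)^2 \<le> (WN N + cS N) * (Q N + cS N * CS^?m * SQ N)"
      by (rule comb2[OF _ s1(1)]) (use Suc.IH s1 c0 in auto)
    hence "(A N + cS N * SA N + cH' N * HA N)^2 \<le> (WN N + cS N + cH N) * (Q N + cS N * CS^?m * SQ N + cH N * (1/R^2)^?m * HQ N)"
      by (rule comb2[OF _ s2(1)]) (use Suc.IH s1 s2 c0 in auto)
    moreover have "0 \<le> Q N + cS N * CS^?m * SQ N + cH N * (1/R^2)^?m * HQ N" using Suc.IH s1 s2 by simp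
    moreover have "0 \<le> WN N + cS N + cH N" using Suc.IH c0 by simp
    ultimately show ?case unfolding Asuc Qsuc WNs by (simp add: mult.assoc)
  qed
  define W where "W = dotp dE wE wE + b^2 + (\<alpha>S + \<alpha>H) * (pi/2)"
  have r1: "\<bar>r\<bar> < 1" using r by simp
  have W_le: "WN N \<le> W" for N
  proof -
    have "(\<Sum>n<N. cS n + cH n) = (\<alpha>S + \<alpha>H) * (\<Sum>n<N. fa n * r^Suc n)"
      by (simp add: cS_def cH_def sum_distrib_left sum.distrib algebra_simps)
    also have "(\<Sum>n<N. fa n * r^Suc n) \<le> arcsin r"
    proof -
      note sr = arcsin_series[OF r1]
      have "(\<Sum>n<N. fa n * r^Suc n) \<le> suminf (\<lambda>n. fa n * r^Suc n)"
        by (rule sum_le_suminf[OF sums_summable[OF sr]]) (use fa0 r in auto)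
      thus ?thesis using sums_unique[OF sr] by simp
    qed
    hence "(\<alpha>S + \<alpha>H) * (\<Sum>n<N. fa n * r^Suc n) \<le> (\<alpha>S + \<alpha>H) * (pi/2)"
      using arcsin_bounded[of r] r pos by (intro mult_left_mono) auto
    finally show ?thesis by (simp add: WN_def W_def)
  qed
  have AQ: "A N ^2 \<le> W * Q N" for N
    using claim[of N] W_le[of N] mult_right_mono[of "WN N" W "Q N"] by auto
  define Ft where "Ft i = dotp dE wE (xE i) + b + \<alpha>S * arcsin (r * dotp (Suc dS) wS (xS i))
      + \<alpha>H * arsinh (r * dotp (Suc dH) w' (xH i))" for i
  define Gt where "Gt i j = 1 + dotp dE (xE i) (xE j)
      + \<alpha>S * arcsin (r * (CS * dotp (Suc dS) (xS i) (xS j)))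
      + \<alpha>H * arcsin (r * (dotp (Suc dH) (xH i) (xH j) / R^2))" for i j
  have FL: "(\<lambda>N. F N i) \<longlonglongrightarrow> Ft i" if "i \<in> I" for i
  proof -
    note s1 = arcsin_series[OF rlt[OF r bS[OF that]], unfolded sums_def]
    note s2 = arsinh_series[OF rlt[OF r bH[OF that]], unfolded sums_def]
    show ?thesis unfolding F_def Ft_def by (intro tendsto_intros s1 s2)
  qed
  have GL: "(\<lambda>N. G N i j) \<longlonglongrightarrow> Gt i j" if "i \<in> I" "j \<in> I" for i j
  proof -
    note s1 = arcsin_series[OF rlt[OF r bSS[OF that]], unfolded sums_def]
    note s2 = arcsin_series[OF rlt[OF r bHH[OF that]], unfolded sums_def]
    show ?thesis unfolding G_def Gt_def by (intro tendsto_intros s1 s2)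
  qed
  have AL: "A \<longlonglongrightarrow> (\<Sum>i\<in>I. a i * Ft i)"
    unfolding A_def by (intro tendsto_sum tendsto_mult_left FL)
  have QL: "Q \<longlonglongrightarrow> (\<Sum>i\<in>I. \<Sum>j\<in>I. a i * a j * Gt i j)"
    unfolding Q_def by (intro tendsto_sum tendsto_mult_left GL)
  have "(\<Sum>i\<in>I. a i * Ft i)^2 \<le> W * (\<Sum>i\<in>I. \<Sum>j\<in>I. a i * a j * Gt i j)"
    by (rule LIMSEQ_le[OF tendsto_power[OF AL] tendsto_mult_left[OF QL]]) (use AQ in auto)
  thus ?thesis by (simp add: Ft_def Gt_def W_def xE_def xS_def xH_def lor)
qed



lemma cont_arcsin_r:
  fixes t :: real
  assumes "\<bar>t\<bar> \<le> 1"
  shows "continuous_on {0..1} (\<lambda>r. arcsin (r * t))"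
proof (rule continuous_on_arcsin)
  show "continuous_on {0..1} (\<lambda>r. r * t)" by (intro continuous_intros)
  show "\<forall>x\<in>{0..1}. - 1 \<le> x * t \<and> x * t \<le> 1"
  proof
    fix x :: real assume "x \<in> {0..1}"
    hence "\<bar>x * t\<bar> \<le> 1" using assms by (simp add: abs_mult mult_le_one)
    thus "- 1 \<le> x * t \<and> x * t \<le> 1" by linarith
  qed
qed

lemma cont_arsinh_r: "continuous_on A (\<lambda>r. arsinh (r * (t::real)))"
  by (intro continuous_intros)

lemma main_1:
  fixes a :: "'i \<Rightarrow> real" and p :: "'i \<Rightarrow> point"
  assumes fin: "finite I"
    and pos: "\<alpha>S \<ge> 0" "\<alpha>H \<ge> 0" "CS > 0" "R > 0"
    and sph: "\<forall>i\<in>I. dotp (Suc dS) (fst (snd (p i))) (fst (snd (p i))) = 1/CS"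
    and hyp: "\<forall>i\<in>I. dotp (Suc dH) (snd (snd (p i))) (snd (snd (p i))) \<le> R^2"
    and wS: "dotp (Suc dS) wS wS = CS"
    and wH: "dotp (Suc dH) wH wH \<le> 1/R^2"
  shows "(\<Sum>i\<in>I. a i * (dotp dE wE (fst (p i)) + b
            + \<alpha>S * arcsin (dotp (Suc dS) wS (fst (snd (p i))))
            + \<alpha>H * arsinh (lorentz dH wH (snd (snd (p i))))))^2
     \<le> (dotp dE wE wE + b^2 + (\<alpha>S + \<alpha>H) * (pi/2)) *
        (\<Sum>i\<in>I. \<Sum>j\<in>I. a i * a j * (1 + dotp dE (fst (p i)) (fst (p j))
            + \<alpha>S * arcsin (CS * dotp (Suc dS) (fst (snd (p i))) (fst (snd (p j))))
            + \<alpha>H * arcsin (dotp (Suc dH) (snd (snd (p i))) (snd (snd (p j))) / R^2)))"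
proof -
  define xE where "xE i = fst (p i)" for i
  define xS where "xS i = fst (snd (p i))" for i
  define xH where "xH i = snd (snd (p i))" for i
  define W where "W = dotp dE wE wE + b^2 + (\<alpha>S + \<alpha>H) * (pi/2)"
  define H where "H r = W * (\<Sum>i\<in>I. \<Sum>j\<in>I. a i * a j * (1 + dotp dE (xE i) (xE j)
            + \<alpha>S * arcsin (r * (CS * dotp (Suc dS) (xS i) (xS j)))
            + \<alpha>H * arcsin (r * (dotp (Suc dH) (xH i) (xH j) / R^2))))
      - (\<Sum>i\<in>I. a i * (dotp dE wE (xE i) + b
            + \<alpha>S * arcsin (r * dotp (Suc dS) wS (xS i))
            + \<alpha>H * arsinh (r * lorentz dH wH (xH i))))^2" for r
  have bS: "\<bar>dotp (Suc dS) wS (xS i)\<bar> \<le> 1" if "i \<in> I" for i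
    using abs_le1[OF dotp_cs[of "Suc dS" wS "xS i"] dotp_nonneg dotp_nonneg, where al=CS and be="1/CS" and k=1]
      wS sph that pos by (simp add: xS_def)
  have bSS: "\<bar>CS * dotp (Suc dS) (xS i) (xS j)\<bar> \<le> 1" if "i \<in> I" "j \<in> I" for i j
    using abs_le1[OF dotp_cs[of "Suc dS" "xS i" "xS j"] dotp_nonneg dotp_nonneg, where al="1/CS" and be="1/CS" and k=CS]
      sph that pos by (simp add: xS_def power2_eq_square)
  have bHH: "\<bar>dotp (Suc dH) (xH i) (xH j) / R^2\<bar> \<le> 1" if "i \<in> I" "j \<in> I" for i j
  proof -
    have k: "(1/R^2)^2 * (R^2 * R^2) \<le> 1" using pos by (simp add: power2_eq_square)
    have hi: "dotp (Suc dH) (xH i) (xH i) \<le> R^2" "dotp (Suc dH) (xH j) (xH j) \<le> R^2"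
      using hyp that by (auto simp: xH_def)
    have "\<bar>1/R^2 * dotp (Suc dH) (xH i) (xH j)\<bar> \<le> 1"
      by (rule abs_le1[OF dotp_cs dotp_nonneg dotp_nonneg hi k])
    moreover have "1/R^2 * dotp (Suc dH) (xH i) (xH j) = dotp (Suc dH) (xH i) (xH j) / R^2" by simp
    ultimately show ?thesis by simp
  qed
  have cont: "continuous_on {0..1} H"
    unfolding H_def
    apply (intro continuous_on_diff continuous_on_mult continuous_on_sum continuous_on_add
        continuous_on_power continuous_on_const cont_arsinh_r cont_arcsin_r)
    using bS bSS bHH by auto
  have "H 1 \<ge> 0"
  proof (rule continuous_ge_on_closure[where S="{0..<1}" and f=H and x=1 and a=0])
    show "continuous_on (closure {0..<1}) H" using cont by simp
    show "(1::real) \<in> closure {0..<1}" by simp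
    fix r :: real assume "r \<in> {0..<1}"
    hence r: "0 \<le> r" "r < 1" by auto
    show "H r \<ge> 0"
      using main_r[OF fin r pos sph hyp wS wH, of a dE wE b]
      by (simp add: H_def W_def xE_def xS_def xH_def)
  qed
  thus ?thesis by (simp add: H_def W_def xE_def xS_def xH_def)
qed



lemma sum_list_map_nth: "sum_list (map f xs) = (\<Sum>i<length xs. f (xs ! i))"
  using sum_list_sum_nth[of "map f xs"] by (simp add: atLeast0LessThan)

lemma perc_g_app: "perc_g K X y (u @ [n]) x = perc_g K X y u x + y n * K x (X n)"
  by (simp add: perc_g_def)

definition Qs where "Qs K X y u = sum_list (map (\<lambda>i. y i * perc_g K X y u (X i)) u)"

lemma Qs_app:
  assumes sym: "\<And>p q. K p q = K q p"
  shows "Qs K X y (u @ [n]) = Qs K X y u + 2 * (y n * perc_g K X y u (X n)) + y n * y n * K (X n) (X n)"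
proof -
  have "Qs K X y (u @ [n]) = sum_list (map (\<lambda>i. y i * perc_g K X y u (X i) + y n * (y i * K (X n) (X i))) u)
      + y n * (perc_g K X y u (X n) + y n * K (X n) (X n))"
    by (simp add: Qs_def perc_g_app distrib_left sym mult_ac)
  also have "\<dots> = Qs K X y u + y n * perc_g K X y u (X n) + y n * (perc_g K X y u (X n) + y n * K (X n) (X n))"
    by (simp add: sum_list_addf sum_list_const_mult Qs_def perc_g_def)
  finally show ?thesis by (simp add: algebra_simps)
qed

lemma Qs_double: "Qs K X y u = (\<Sum>i<length u. \<Sum>j<length u. y (u!i) * y (u!j) * K (X (u!i)) (X (u!j)))"
  by (simp add: Qs_def perc_g_def sum_list_map_nth sum_distrib_left mult_ac)

lemma enorm_le: "enorm d u \<le> c \<Longrightarrow> dotp d u u \<le> c^2"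
proof -
  assume h: "enorm d u \<le> c"
  have s: "0 \<le> dotp d u u" by (rule dotp_nonneg)
  have "dotp d u u = (sqrt (dotp d u u))^2" using s by simp
  also have "\<dots> \<le> c^2" using h s unfolding enorm_def by (intro power_mono) auto
  finally show ?thesis .
qed

lemma enorm_eq: "enorm d u = c \<Longrightarrow> dotp d u u = c^2"
proof -
  assume h: "enorm d u = c"
  have s: "0 \<le> dotp d u u" by (rule dotp_nonneg)
  have "dotp d u u = (sqrt (dotp d u u))^2" using s by simp
  thus ?thesis using h unfolding enorm_def by simp
qed

lemma psf_alt: "psf_kernel dE dS dH \<alpha>S \<alpha>H CS R x x' =
   1 + dotp dE (fst x) (fst x') + \<alpha>S * arcsin (CS * dotp (Suc dS) (fst (snd x)) (fst (snd x')))
     + \<alpha>H * arcsin (dotp (Suc dH) (snd (snd x)) (snd (snd x')) / R^2)"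
  by (cases x; cases x') (simp add: psf_kernel_def)

lemma psf_sym: "psf_kernel dE dS dH \<alpha>S \<alpha>H CS R x x' = psf_kernel dE dS dH \<alpha>S \<alpha>H CS R x' x"
  unfolding psf_alt by (simp add: dotp_comm)

lemma sgn_upd: "y \<in> {-1, 1} \<Longrightarrow> sgn (g::real) \<noteq> y \<Longrightarrow> y * g \<le> 0"
  by (auto simp: sgn_if split: if_splits)

lemma perc_run_Suc: "perc_run K N X y (Suc t) = perc_step K N X y (perc_run K N X y t)"
  by (simp add: perc_run_def)

lemma perc_run_prefix: "t \<le> t' \<Longrightarrow> \<exists>zs. fst (perc_run K N X y t') = fst (perc_run K N X y t) @ zs"
proof (induction t' rule: dec_induct)
  case base thus ?case by auto
next
  case (step m)
  then obtain zs where zs: "fst (perc_run K N X y m) = fst (perc_run K N X y t) @ zs" by blast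
  obtain u n where un: "perc_run K N X y m = (u, n)" by fastforce
  show ?case using zs un
    by (auto simp: perc_run_Suc perc_step_def)
qed

lemma converge_from_bound:
  assumes bnd: "\<And>t. real (length (fst (perc_run K N X y t))) \<le> T"
  shows "perc_converges_within K N X y T"
proof -
  let ?L = "\<lambda>t. length (fst (perc_run K N X y t))"
  define P where "P l = (\<exists>t. ?L t = l)" for l
  have b: "\<forall>l. P l \<longrightarrow> l \<le> nat \<lceil>T\<rceil>"
  proof (intro allI impI)
    fix l assume "P l"
    then obtain t where "?L t = l" by (auto simp: P_def)
    hence "real l \<le> T" using bnd by metis
    hence "int l \<le> \<lceil>T\<rceil>" by (metis ceiling_mono ceiling_of_nat)
    thus "l \<le> nat \<lceil>T\<rceil>" by (simp add: le_nat_iff)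
  qed
  obtain l where l: "P l" "\<forall>l'. P l' \<longrightarrow> l' \<le> l"
  proof -
    have "P (?L 0)" unfolding P_def by blast
    from Nat.ex_has_greatest_nat[OF this b] show ?thesis using that by blast
  qed
  then obtain t0 where t0: "?L t0 = l" unfolding P_def by blast
  show ?thesis unfolding perc_converges_within_def
  proof (intro exI[of _ t0] conjI allI impI)
    show "real (?L t0) \<le> T" by (rule bnd)
    fix t' assume "t0 \<le> t'"
    then obtain zs where zs: "fst (perc_run K N X y t') = fst (perc_run K N X y t0) @ zs"
      using perc_run_prefix by blast
    have "?L t' \<le> l" using l(2) P_def by blast
    hence "zs = []" using zs t0 by simp
    thus "fst (perc_run K N X y t') = fst (perc_run K N X y t0)" using zs by simp
  qed
qed



theorem theorem3:
  fixes \<alpha>E \<alpha>S \<alpha>H CS CH R D b :: real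
  assumes "\<alpha>E > 0" "\<alpha>S > 0" "\<alpha>H > 0" "CS > 0" "CH < 0" "R > 0"
  shows "\<exists>M::real. \<forall>(dE::nat) (dS::nat) (dH::nat) (N::nat) (X::nat \<Rightarrow> point) (y::nat \<Rightarrow> real)
            (wE::nat \<Rightarrow> real) (wS::nat \<Rightarrow> real) (wH::nat \<Rightarrow> real) (\<epsilon>::real).
     N \<ge> 1 \<longrightarrow> \<epsilon> > 0 \<longrightarrow>
     (\<forall>n<N. on_sphere dS CS (fst (snd (X n))) \<and> on_hyperboloid dH CH (snd (snd (X n)))) \<longrightarrow>
     (\<forall>n<N. enorm dE (fst (X n)) \<le> D) \<longrightarrow>
     (\<forall>n<N. enorm (dH+1) (snd (snd (X n))) \<le> R) \<longrightarrow>
     (\<forall>n<N. y n \<in> {-1, 1}) \<longrightarrow>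
     enorm dE wE = \<alpha>E \<longrightarrow> enorm (dS+1) wS = sqrt CS \<longrightarrow>
     sqrt (lorentz dH wH wH) = sqrt (- CH) \<longrightarrow>
     (\<forall>n<N. y n * (dotp dE wE (fst (X n)) + b
                 + \<alpha>S * arcsin (dotp (dS+1) wS (fst (snd (X n))))
                 + \<alpha>H * arsinh (lorentz dH wH (snd (snd (X n))))) \<ge> \<epsilon>) \<longrightarrow>
     enorm (dH+1) wH \<le> 1 / R \<longrightarrow>
     perc_converges_within (psf_kernel dE dS dH \<alpha>S \<alpha>H CS R) N X y (M / \<epsilon>\<^sup>2)"
proof -
  define W where "W = \<alpha>E^2 + b^2 + (\<alpha>S + \<alpha>H) * (pi/2)"
  define B where "B = 1 + D^2 + (\<alpha>S + \<alpha>H) * (pi/2)"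
  have W0: "0 \<le> W" unfolding W_def using assms by (intro add_nonneg_nonneg) auto
  have B0: "0 \<le> B" unfolding B_def using assms by (intro add_nonneg_nonneg) auto
  show ?thesis
  proof (rule exI[of _ "W * B"], intro allI impI)
    fix dE dS dH N :: nat and X :: "nat \<Rightarrow> point" and y :: "nat \<Rightarrow> real"
      and wE wS wH :: "nat \<Rightarrow> real" and \<epsilon> :: real
    assume N1: "N \<ge> 1" and eps: "\<epsilon> > 0"
      and pts: "\<forall>n<N. on_sphere dS CS (fst (snd (X n))) \<and> on_hyperboloid dH CH (snd (snd (X n)))"
      and De: "\<forall>n<N. enorm dE (fst (X n)) \<le> D"
      and Rh: "\<forall>n<N. enorm (dH+1) (snd (snd (X n))) \<le> R"
      and ylab: "\<forall>n<N. y n \<in> {-1, 1}"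
      and wEn: "enorm dE wE = \<alpha>E" and wSn: "enorm (dS+1) wS = sqrt CS"
      and wLor: "sqrt (lorentz dH wH wH) = sqrt (- CH)"
      and sep: "\<forall>n<N. y n * (dotp dE wE (fst (X n)) + b
                 + \<alpha>S * arcsin (dotp (dS+1) wS (fst (snd (X n))))
                 + \<alpha>H * arsinh (lorentz dH wH (snd (snd (X n))))) \<ge> \<epsilon>"
      and wHn: "enorm (dH+1) wH \<le> 1 / R"
    define K where "K = psf_kernel dE dS dH \<alpha>S \<alpha>H CS R"
    define fs where "fs p = dotp dE wE (fst p) + b + \<alpha>S * arcsin (dotp (Suc dS) wS (fst (snd p)))
        + \<alpha>H * arsinh (lorentz dH wH (snd (snd p)))" for p
    define Gs where "Gs u = sum_list (map (\<lambda>j. y j * fs (X j)) u)" for u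
    have symK: "K p q = K q p" for p q unfolding K_def by (rule psf_sym)
    have dE2: "dotp dE wE wE = \<alpha>E^2" by (rule enorm_eq[OF wEn])
    have dS2: "dotp (Suc dS) wS wS = CS" using enorm_eq[OF wSn] assms by simp
    have dH2: "dotp (Suc dH) wH wH \<le> 1/R^2" using enorm_le[OF wHn] by (simp add: power_divide)
    have sphn: "dotp (Suc dS) (fst (snd (X n))) (fst (snd (X n))) = 1/CS" if "n < N" for n
      using pts that by (simp add: on_sphere_def)
    have hypn: "dotp (Suc dH) (snd (snd (X n))) (snd (snd (X n))) \<le> R^2" if "n < N" for n
      using enorm_le[of "Suc dH" "snd (snd (X n))" R] Rh that by simp
    have sepn: "y n * fs (X n) \<ge> \<epsilon>" if "n < N" for n
      using sep that by (simp add: fs_def)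
    have Kdiag: "K (X n) (X n) \<le> B" if n: "n < N" for n
    proof -
      have e1: "dotp dE (fst (X n)) (fst (X n)) \<le> D^2" using enorm_le De n by blast
      have "CS * dotp (Suc dS) (fst (snd (X n))) (fst (snd (X n))) = 1" using sphn[OF n] assms by simp
      hence e2: "arcsin (CS * dotp (Suc dS) (fst (snd (X n))) (fst (snd (X n)))) = pi/2" by simp
      define t where "t = dotp (Suc dH) (snd (snd (X n))) (snd (snd (X n))) / R^2"
      have "0 \<le> t" unfolding t_def using dotp_nonneg by simp
      moreover have "t \<le> 1" unfolding t_def using hypn[OF n] assms by simp
      ultimately have e3: "arcsin t \<le> pi/2" using arcsin_bounded[of t] by simp
      have "K (X n) (X n) = 1 + dotp dE (fst (X n)) (fst (X n)) + \<alpha>S * (pi/2) + \<alpha>H * arcsin t"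
        unfolding K_def psf_alt e2 t_def by simp
      also have "\<dots> \<le> 1 + D^2 + \<alpha>S * (pi/2) + \<alpha>H * (pi/2)"
        using e1 e3 assms by (intro add_mono mult_left_mono) auto
      also have "\<dots> = B" unfolding B_def by (simp add: distrib_right)
      finally show ?thesis .
    qed
    define st where "st t = perc_run K N X y t" for t
    have inv: "snd (st t) < N \<and> set (fst (st t)) \<subseteq> {..<N}
       \<and> Qs K X y (fst (st t)) \<le> real (length (fst (st t))) * B
       \<and> real (length (fst (st t))) * \<epsilon> \<le> Gs (fst (st t))" for t
    proof (induction t)
      case 0
      thus ?case using N1 by (simp add: st_def perc_run_def Qs_def Gs_def)
    next
      case (Suc t)
      obtain u n where un: "st t = (u, n)" by fastforce
      have IH: "n < N" "set u \<subseteq> {..<N}" "Qs K X y u \<le> real (length u) * B"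
        "real (length u) * \<epsilon> \<le> Gs u" using Suc.IH un by auto
      have stS: "st (Suc t) = (if sgn (perc_g K X y u (X n)) \<noteq> y n then u @ [n] else u, Suc n mod N)"
        using un by (simp add: st_def perc_run_Suc perc_step_def)
      have modN: "Suc n mod N < N" using N1 by simp
      show ?case
      proof (cases "sgn (perc_g K X y u (X n)) \<noteq> y n")
        case True
        have yn: "y n \<in> {-1, 1}" using ylab IH(1) by blast
        have yy: "y n * y n = 1" using yn by auto
        have neg: "y n * perc_g K X y u (X n) \<le> 0" by (rule sgn_upd[OF yn True])
        have "Qs K X y (u @ [n]) = Qs K X y u + 2 * (y n * perc_g K X y u (X n)) + y n * y n * K (X n) (X n)"
          by (rule Qs_app[OF symK])
        also have "\<dots> \<le> real (length u) * B + 0 + B"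
          using IH(3) neg Kdiag[OF IH(1)] yy by (intro add_mono) auto
        finally have q: "Qs K X y (u @ [n]) \<le> real (length (u @ [n])) * B" by (simp add: algebra_simps)
        have "Gs (u @ [n]) = Gs u + y n * fs (X n)" by (simp add: Gs_def)
        hence g: "real (length (u @ [n])) * \<epsilon> \<le> Gs (u @ [n])"
          using IH(4) sepn[OF IH(1)] by (simp add: algebra_simps)
        show ?thesis using stS True IH(1,2) modN q g by simp
      next
        case False
        show ?thesis using stS False IH modN by simp
      qed
    qed
    have bound: "real (length (fst (st t))) \<le> W * B / \<epsilon>^2" for t
    proof -
      define u where "u = fst (st t)"
      define L where "L = length u"
      have uN: "set u \<subseteq> {..<N}" "Qs K X y u \<le> real L * B" "real L * \<epsilon> \<le> Gs u"
        using inv[of t] by (auto simp: u_def L_def)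
      have uiN: "u ! i < N" if "i \<in> {..<L}" for i using subsetD[OF uN(1) nth_mem[of i u]] that by (simp add: L_def)
      have M: "(\<Sum>i\<in>{..<L}. y (u!i) * (dotp dE wE (fst (X (u!i))) + b
            + \<alpha>S * arcsin (dotp (Suc dS) wS (fst (snd (X (u!i)))))
            + \<alpha>H * arsinh (lorentz dH wH (snd (snd (X (u!i)))))))^2
         \<le> (dotp dE wE wE + b^2 + (\<alpha>S + \<alpha>H) * (pi/2)) *
        (\<Sum>i\<in>{..<L}. \<Sum>j\<in>{..<L}. y (u!i) * y (u!j) * (1 + dotp dE (fst (X (u!i))) (fst (X (u!j)))
            + \<alpha>S * arcsin (CS * dotp (Suc dS) (fst (snd (X (u!i)))) (fst (snd (X (u!j)))))
            + \<alpha>H * arcsin (dotp (Suc dH) (snd (snd (X (u!i)))) (snd (snd (X (u!j)))) / R^2)))"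
        by (rule main_1[where p="\<lambda>i. X (u!i)" and a="\<lambda>i. y (u!i)"])
           (use assms sphn hypn uiN dS2 dH2 in auto)
      have GsE: "Gs u = (\<Sum>i\<in>{..<L}. y (u!i) * fs (X (u!i)))"
        by (simp add: Gs_def sum_list_map_nth L_def)
      have QsE: "Qs K X y u = (\<Sum>i\<in>{..<L}. \<Sum>j\<in>{..<L}. y (u!i) * y (u!j) * (1 + dotp dE (fst (X (u!i))) (fst (X (u!j)))
            + \<alpha>S * arcsin (CS * dotp (Suc dS) (fst (snd (X (u!i)))) (fst (snd (X (u!j)))))
            + \<alpha>H * arcsin (dotp (Suc dH) (snd (snd (X (u!i)))) (snd (snd (X (u!j)))) / R^2)))"
        by (simp add: Qs_double L_def K_def psf_alt)
      have G2: "(Gs u)^2 \<le> W * Qs K X y u"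
        using M unfolding GsE QsE fs_def W_def dE2 .
      have "(real L * \<epsilon>)^2 \<le> (Gs u)^2"
        using uN(3) eps by (intro power_mono) auto
      also have "\<dots> \<le> W * (real L * B)" using G2 uN(2) W0 mult_left_mono order_trans by metis
      finally have key: "(real L * \<epsilon>)^2 \<le> W * (real L * B)" .
      show ?thesis
      proof (cases "L = 0")
        case True
        thus ?thesis using W0 B0 by (simp add: u_def L_def)
      next
        case False
        hence Lp: "real L > 0" by simp
        have "real L * (real L * \<epsilon>^2) \<le> real L * (W * B)"
          using key by (simp add: power_mult_distrib power2_eq_square algebra_simps)
        hence "real L * \<epsilon>^2 \<le> W * B" using Lp by simp
        hence "real L \<le> W * B / \<epsilon>^2" using eps by (simp add: pos_le_divide_eq)
        thus ?thesis by (simp add: u_def L_def)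
      qed
    qed
    show "perc_converges_within (psf_kernel dE dS dH \<alpha>S \<alpha>H CS R) N X y (W * B / \<epsilon>\<^sup>2)"
      using converge_from_bound[of K N X y "W * B / \<epsilon>^2"] bound unfolding st_def K_def by simp
  qed
qed


end
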